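(* Let $(X,d,G)$ be a $G$-system with $\overline{\mathrm{mdim}}_M(G,X,d)<\infty$, and let $\mu$ be a finite signed Borel measure on $X$. Then the following are equivalent: (i) $\mu\in M(X,G)$; (ii) $\int f\,d\mu\le\underline{\mathrm{mdim}}_M(G,X,f,d)$ for all $f\in C(X,\mathbb R)$; (iii) $\int f\,d\mu\le\overline{\mathrm{mdim}}_M(G,X,f,d)$ for all $f\in C(X,\mathbb R)$.
   Context: $G$ is a countably infinite discrete amenable group; $(X,d,G)$ a compact metric space with continuous $G$-action by homeomorphisms; $M(X,G)$ the set of $G$-invariant Borel probability measures. Let $\{F_n\}$ be a Følner sequence ($|gF_n\triangle F_n|/|F_n|\to0$); the quantities below do not depend on its choice. $d_F(x,y)=\max_{g\in F}d(gx,gy)$, $S_Ff(x)=\sum_{g\in F}f(gx)$, $P_F(X,f,d,\epsilon)=\sup\{\sum_{x\in E}e^{S_Ff(x)}:E\subset X$ with $d_F(x,y)>\epsilon$ for distinct $x,y\in E\}$, $P(X,f,d,\{F_n\},\epsilon)=\limsup_n\frac1{|F_n|}\log P_{F_n}(X,f,d,\epsilon)$. Then $\overline{\mathrm{mdim}}_M(G,X,f,d)=\limsup_{\epsilon\to0}\frac{P(X,f\log(1/\epsilon),d,\{F_n\},\epsilon)}{\log(1/\epsilon)}$ and $\underline{\mathrm{mdim}}_M(G,X,f,d)$ is the same with $\liminf_{\epsilon\to0}$; $\overline{\mathrm{mdim}}_M(G,X,d)=\overline{\mathrm{mdim}}_M(G,X,0,d)$. *)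

theory Defs
  imports "HOL-Analysis.Analysis" "HOL-Probability.Probability"
begin

(* G is a type 'g with (not necessarily commutative) group structure written additively;
   act g x is the action of g on x. *)

definition G_system :: "('g::group_add \<Rightarrow> 'x::metric_space \<Rightarrow> 'x) \<Rightarrow> 'x set \<Rightarrow> bool" where
  "G_system act X \<longleftrightarrow> compact X \<and> X \<noteq> {} \<and>
     (\<forall>g. continuous_on X (act g) \<and> act g ` X \<subseteq> X) \<and>
     (\<forall>x\<in>X. act 0 x = x) \<and>
     (\<forall>g h. \<forall>x\<in>X. act (g + h) x = act g (act h x))"

definition sym_diff :: "'a set \<Rightarrow> 'a set \<Rightarrow> 'a set" where
  "sym_diff A B = (A - B) \<union> (B - A)"

definition Folner_seq :: "(nat \<Rightarrow> 'g::group_add set) \<Rightarrow> bool" where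
  "Folner_seq Fs \<longleftrightarrow> (\<forall>n. finite (Fs n) \<and> Fs n \<noteq> {}) \<and>
     (\<forall>g. (\<lambda>n. real (card (sym_diff ((\<lambda>h. g + h) ` Fs n) (Fs n))) / real (card (Fs n)))
            \<longlonglongrightarrow> 0)"

definition dF :: "('g \<Rightarrow> 'x::metric_space \<Rightarrow> 'x) \<Rightarrow> 'g set \<Rightarrow> 'x \<Rightarrow> 'x \<Rightarrow> real" where
  "dF act F x y = Max ((\<lambda>g. dist (act g x) (act g y)) ` F)"

definition SF :: "('g \<Rightarrow> 'x \<Rightarrow> 'x) \<Rightarrow> 'g set \<Rightarrow> ('x \<Rightarrow> real) \<Rightarrow> 'x \<Rightarrow> real" where
  "SF act F f x = (\<Sum>g\<in>F. f (act g x))"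

(* P_F(X,f,d,eps): supremum over (eps,d_F)-separated subsets E of X.
   Such sets are finite since X is compact. *)
definition PF :: "('g \<Rightarrow> 'x::metric_space \<Rightarrow> 'x) \<Rightarrow> 'x set \<Rightarrow> ('x \<Rightarrow> real) \<Rightarrow> 'g set \<Rightarrow> real \<Rightarrow> real" where
  "PF act X f F eps = Sup {(\<Sum>x\<in>E. exp (SF act F f x)) | E.
      finite E \<and> E \<subseteq> X \<and> (\<forall>x\<in>E. \<forall>y\<in>E. x \<noteq> y \<longrightarrow> dF act F x y > eps)}"

definition pressure :: "('g \<Rightarrow> 'x::metric_space \<Rightarrow> 'x) \<Rightarrow> 'x set \<Rightarrow> ('x \<Rightarrow> real) \<Rightarrow> (nat \<Rightarrow> 'g set) \<Rightarrow> real \<Rightarrow> ereal" where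
  "pressure act X f Fs eps =
     limsup (\<lambda>n. ereal (ln (PF act X f (Fs n) eps) / real (card (Fs n))))"

definition mdim_upper :: "('g \<Rightarrow> 'x::metric_space \<Rightarrow> 'x) \<Rightarrow> 'x set \<Rightarrow> (nat \<Rightarrow> 'g set) \<Rightarrow> ('x \<Rightarrow> real) \<Rightarrow> ereal" where
  "mdim_upper act X Fs f =
     Limsup (at_right 0) (\<lambda>eps. pressure act X (\<lambda>x. f x * ln (1 / eps)) Fs eps / ereal (ln (1 / eps)))"

definition mdim_lower :: "('g \<Rightarrow> 'x::metric_space \<Rightarrow> 'x) \<Rightarrow> 'x set \<Rightarrow> (nat \<Rightarrow> 'g set) \<Rightarrow> ('x \<Rightarrow> real) \<Rightarrow> ereal" where
  "mdim_lower act X Fs f =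
     Liminf (at_right 0) (\<lambda>eps. pressure act X (\<lambda>x. f x * ln (1 / eps)) Fs eps / ereal (ln (1 / eps)))"

(* A finite signed Borel measure on X is represented (Jordan decomposition) as
   mu = mu_pos - mu_neg with mu_pos, mu_neg finite Borel measures on X. *)
definition finite_borel_on :: "'x::topological_space set \<Rightarrow> 'x measure \<Rightarrow> bool" where
  "finite_borel_on X M \<longleftrightarrow> sets M = sets (restrict_space borel X) \<and> finite_measure M"

definition signed_val :: "'x measure \<Rightarrow> 'x measure \<Rightarrow> 'x set \<Rightarrow> real" where
  "signed_val Mp Mn A = measure Mp A - measure Mn A"

definition signed_integral :: "'x measure \<Rightarrow> 'x measure \<Rightarrow> ('x \<Rightarrow> real) \<Rightarrow> real" where
  "signed_integral Mp Mn f = integral\<^sup>L Mp f - integral\<^sup>L Mn f"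

definition invariant_prob :: "('g \<Rightarrow> 'x::topological_space \<Rightarrow> 'x) \<Rightarrow> 'x set \<Rightarrow> 'x measure \<Rightarrow> 'x measure \<Rightarrow> bool" where
  "invariant_prob act X Mp Mn \<longleftrightarrow>
     (\<forall>A\<in>sets (restrict_space borel X). signed_val Mp Mn A \<ge> 0) \<and>
     signed_val Mp Mn X = 1 \<and>
     (\<forall>g. \<forall>A\<in>sets (restrict_space borel X).
        signed_val Mp Mn (act g -` A \<inter> X) = signed_val Mp Mn A)"

end

theory Submission
  imports Defs
begin


lemma nn_integral_sum_measures:
  fixes M N1 N2 :: "'a measure" and u :: "'a \<Rightarrow> ennreal"
  assumes s1: "sets N1 = sets M" and s2: "sets N2 = sets M"
    and e: "\<And>A. A \<in> sets M \<Longrightarrow> emeasure M A = emeasure N1 A + emeasure N2 A"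
    and u: "u \<in> borel_measurable M"
  shows "nn_integral M u = nn_integral N1 u + nn_integral N2 u"
  using u
proof (induct rule: borel_measurable_induct)
  case (cong f g)
  have "nn_integral M f = nn_integral M g" by (rule nn_integral_cong) (simp add: cong)
  moreover have "nn_integral N1 f = nn_integral N1 g"
    by (rule nn_integral_cong) (simp add: cong sets_eq_imp_space_eq[OF s1])
  moreover have "nn_integral N2 f = nn_integral N2 g"
    by (rule nn_integral_cong) (simp add: cong sets_eq_imp_space_eq[OF s2])
  ultimately show ?case using cong by simp
next
  case (set A)
  then show ?case using s1 s2 e by simp
next
  case (mult u c)
  have m1: "u \<in> borel_measurable N1" using mult measurable_cong_sets[OF s1 refl] by blast
  have m2: "u \<in> borel_measurable N2" using mult measurable_cong_sets[OF s2 refl] by blast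
  show ?case using mult m1 m2
    by (simp add: nn_integral_cmult distrib_left)
next
  case (add u v)
  have m1: "u \<in> borel_measurable N1" "v \<in> borel_measurable N1" using add measurable_cong_sets[OF s1 refl] by blast+
  have m2: "u \<in> borel_measurable N2" "v \<in> borel_measurable N2" using add measurable_cong_sets[OF s2 refl] by blast+
  show ?case using add m1 m2
    by (simp add: nn_integral_add algebra_simps)
next
  case (seq U)
  have m1: "U i \<in> borel_measurable N1" for i using seq measurable_cong_sets[OF s1 refl] by blast
  have m2: "U i \<in> borel_measurable N2" for i using seq measurable_cong_sets[OF s2 refl] by blast
  have SU: "(SUP i. U i) = (\<lambda>x. SUP i. U i x)" by (auto simp: image_comp)
  have a0: "nn_integral M (SUP i. U i) = (SUP i. nn_integral M (U i))"
    unfolding SU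
    by (rule nn_integral_monotone_convergence_SUP) (use seq in auto)
  have a1: "nn_integral N1 (SUP i. U i) = (SUP i. nn_integral N1 (U i))"
    unfolding SU
    by (rule nn_integral_monotone_convergence_SUP) (use seq m1 in auto)
  have a2: "nn_integral N2 (SUP i. U i) = (SUP i. nn_integral N2 (U i))"
    unfolding SU
    by (rule nn_integral_monotone_convergence_SUP) (use seq m2 in auto)
  have a3: "(SUP i. nn_integral N1 (U i) + nn_integral N2 (U i)) = 
      (SUP i. nn_integral N1 (U i)) + (SUP i. nn_integral N2 (U i))"
    by (rule ennreal_SUP_add) (auto intro!: incseq_nn_integral seq m1 m2 simp: nn_integral_mono le_funD[OF incseqD[OF seq(4)]] incseq_def)
  have "nn_integral M (SUP i. U i) = (SUP i. nn_integral N1 (U i) + nn_integral N2 (U i))"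
    unfolding a0 using seq(3) by simp
  then show ?case unfolding a1 a2 a3 .
qed



lemma integrable_bounded_fm:
  fixes f :: "'a \<Rightarrow> real"
  assumes "finite_measure M" "f \<in> borel_measurable M" "\<And>x. x \<in> space M \<Longrightarrow> \<bar>f x\<bar> \<le> B"
  shows "integrable M f"
  using assms by (intro finite_measure.integrable_const_bound[where B=B]) auto

lemma integral_sum_measures_nonneg:
  fixes f :: "'a \<Rightarrow> real"
  assumes fM: "finite_measure M" and f1: "finite_measure N1" and f2: "finite_measure N2"
    and s1: "sets N1 = sets M" and s2: "sets N2 = sets M"
    and e: "\<And>A. A \<in> sets M \<Longrightarrow> emeasure M A = emeasure N1 A + emeasure N2 A"
    and f: "f \<in> borel_measurable M" and B: "\<And>x. x \<in> space M \<Longrightarrow> \<bar>f x\<bar> \<le> B"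
    and nn: "\<And>x. x \<in> space M \<Longrightarrow> 0 \<le> f x"
  shows "integral\<^sup>L M f = integral\<^sup>L N1 f + integral\<^sup>L N2 f"
proof -
  have sp1: "space N1 = space M" using sets_eq_imp_space_eq[OF s1] .
  have sp2: "space N2 = space M" using sets_eq_imp_space_eq[OF s2] .
  have m1: "f \<in> borel_measurable N1" using f measurable_cong_sets[OF s1 refl] by blast
  have m2: "f \<in> borel_measurable N2" using f measurable_cong_sets[OF s2 refl] by blast
  have iM: "integrable M f" by (rule integrable_bounded_fm[OF fM f B])
  have i1: "integrable N1 f" by (rule integrable_bounded_fm[OF f1 m1]) (use B sp1 in auto)
  have i2: "integrable N2 f" by (rule integrable_bounded_fm[OF f2 m2]) (use B sp2 in auto)
  have "ennreal (integral\<^sup>L M f) = nn_integral M (\<lambda>x. ennreal (f x))"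
    by (rule nn_integral_eq_integral[symmetric]) (use iM nn in auto)
  also have "\<dots> = nn_integral N1 (\<lambda>x. ennreal (f x)) + nn_integral N2 (\<lambda>x. ennreal (f x))"
    by (rule nn_integral_sum_measures[OF s1 s2 e]) (use f in auto)
  also have "nn_integral N1 (\<lambda>x. ennreal (f x)) = ennreal (integral\<^sup>L N1 f)"
    by (rule nn_integral_eq_integral) (use i1 nn sp1 in auto)
  also have "nn_integral N2 (\<lambda>x. ennreal (f x)) = ennreal (integral\<^sup>L N2 f)"
    by (rule nn_integral_eq_integral) (use i2 nn sp2 in auto)
  also have "ennreal (integral\<^sup>L N1 f) + ennreal (integral\<^sup>L N2 f) = ennreal (integral\<^sup>L N1 f + integral\<^sup>L N2 f)"
    by (rule ennreal_plus[symmetric]) (auto intro!: integral_nonneg_AE simp: nn sp1 sp2)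
  finally show ?thesis
    by (subst (asm) ennreal_inj) (auto intro!: integral_nonneg_AE add_nonneg_nonneg simp: nn sp1 sp2)
qed

lemma integral_sum_measures:
  fixes f :: "'a \<Rightarrow> real"
  assumes fM: "finite_measure M" and f1: "finite_measure N1" and f2: "finite_measure N2"
    and s1: "sets N1 = sets M" and s2: "sets N2 = sets M"
    and e: "\<And>A. A \<in> sets M \<Longrightarrow> emeasure M A = emeasure N1 A + emeasure N2 A"
    and f: "f \<in> borel_measurable M" and B: "\<And>x. x \<in> space M \<Longrightarrow> \<bar>f x\<bar> \<le> B"
  shows "integral\<^sup>L M f = integral\<^sup>L N1 f + integral\<^sup>L N2 f"
proof -
  have sp1: "space N1 = space M" using sets_eq_imp_space_eq[OF s1] .
  have sp2: "space N2 = space M" using sets_eq_imp_space_eq[OF s2] .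
  define p where "p = (\<lambda>x. max 0 (f x))"
  define q where "q = (\<lambda>x. max 0 (- f x))"
  have fpq: "f = (\<lambda>x. p x - q x)" by (auto simp: p_def q_def fun_eq_iff)
  have pm: "p \<in> borel_measurable M" "q \<in> borel_measurable M" using f by (auto simp: p_def q_def)
  have pB0: "\<bar>p x\<bar> \<le> B \<and> \<bar>q x\<bar> \<le> B" if "x \<in> space M" for x
  proof -
    have "\<bar>f x\<bar> \<le> B" using B that .
    then show ?thesis unfolding p_def q_def by (auto simp: abs_if max_def)
  qed
  have pB: "\<And>x. x \<in> space M \<Longrightarrow> \<bar>p x\<bar> \<le> B" "\<And>x. x \<in> space M \<Longrightarrow> \<bar>q x\<bar> \<le> B"
    using pB0 by auto
  have pn: "\<And>x. 0 \<le> p x" "\<And>x. 0 \<le> q x" by (auto simp: p_def q_def)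
  have P: "integral\<^sup>L M p = integral\<^sup>L N1 p + integral\<^sup>L N2 p"
    by (rule integral_sum_measures_nonneg[OF fM f1 f2 s1 s2 e pm(1) pB(1) pn(1)])
  have Q: "integral\<^sup>L M q = integral\<^sup>L N1 q + integral\<^sup>L N2 q"
    by (rule integral_sum_measures_nonneg[OF fM f1 f2 s1 s2 e pm(2) pB(2) pn(2)])
  have int: "integrable K p \<and> integrable K q" if "finite_measure K" "sets K = sets M" for K
  proof -
    have sp: "space K = space M" using sets_eq_imp_space_eq[OF that(2)] .
    have mK: "p \<in> borel_measurable K" "q \<in> borel_measurable K"
      using pm measurable_cong_sets[OF that(2) refl] by blast+
    have "integrable K p"
      by (rule integrable_bounded_fm[OF that(1) mK(1), of B]) (simp add: sp pB(1))
    moreover have "integrable K q"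
      by (rule integrable_bounded_fm[OF that(1) mK(2), of B]) (simp add: sp pB(2))
    ultimately show ?thesis by blast
  qed
  have D: "integral\<^sup>L K f = integral\<^sup>L K p - integral\<^sup>L K q" if "finite_measure K" "sets K = sets M" for K
  proof -
    have "integral\<^sup>L K (\<lambda>x. p x - q x) = integral\<^sup>L K p - integral\<^sup>L K q"
      using int[OF that] by (simp add: integral_diff)
    then show ?thesis by (subst fpq)
  qed
  have "integral\<^sup>L M f = integral\<^sup>L M p - integral\<^sup>L M q" by (rule D[OF fM refl])
  also have "\<dots> = (integral\<^sup>L N1 p - integral\<^sup>L N1 q) + (integral\<^sup>L N2 p - integral\<^sup>L N2 q)"
    unfolding P Q by simp
  also have "\<dots> = integral\<^sup>L N1 f + integral\<^sup>L N2 f"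
    using D[OF f1 s1] D[OF f2 s2] by simp
  finally show ?thesis .
qed



definition regset :: "'x::metric_space measure \<Rightarrow> 'x set \<Rightarrow> 'x set \<Rightarrow> bool" where
  "regset M X A \<longleftrightarrow> A \<subseteq> X \<and> (\<forall>e>0. \<exists>C U. closed C \<and> C \<subseteq> A \<and> open U \<and> A \<subseteq> U \<and>
        measure M ((U \<inter> X) - C) < e)"

lemma regular_closed_aux:
  fixes M :: "'x::metric_space measure"
  assumes fm: "finite_measure M" and sM: "sets M = sets (restrict_space borel X)" and cX: "closed X"
    and B: "B \<in> sigma_sets UNIV (Collect closed)"
  shows "regset M X (X \<inter> B)"
proof -
  interpret finite_measure M by fact
  have meas: "X \<inter> S \<in> sets M" if "S \<in> sets borel" for S
    using that by (simp add: sM sets_restrict_space)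
  have measo: "X \<inter> S \<in> sets M" if "open S" for S using meas that by auto
  have measc: "C \<in> sets M" if "closed C" "C \<subseteq> X" for C
    using meas[of C] that by (simp add: Int_absorb1)
  show ?thesis using B
  proof (induct rule: sigma_sets.induct)
    case (Basic a)
    then have ca: "closed a" by simp
    define A where "A = X \<inter> a"
    have cA: "closed A" using ca cX by (simp add: A_def closed_Int)
    show ?case unfolding A_def[symmetric] regset_def
    proof (intro conjI allI impI)
      show "A \<subseteq> X" by (simp add: A_def)
      fix e :: real assume e: "e > 0"
      show "\<exists>C U. closed C \<and> C \<subseteq> A \<and> open U \<and> A \<subseteq> U \<and> measure M (U \<inter> X - C) < e"
      proof (cases "A = {}")
        case True
        then show ?thesis using e by (intro exI[of _ "{}"]) auto
      next
        case False
        define U where "U n = {x. infdist x A < 1 / real (Suc n)}" for n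
        have oU: "open (U n)" for n unfolding U_def
          by (intro open_Collect_less continuous_intros) 
        define D where "D n = U n \<inter> X - A" for n
        have Dm1: "D n \<in> sets M" for n
        proof -
          have "D n = (X \<inter> U n) - A" by (auto simp: D_def)
          moreover have "A \<in> sets M" by (rule measc[OF cA]) (simp add: A_def)
          ultimately show ?thesis using measo[OF oU, of n] by (simp add: sets.Diff)
        qed
        have Dm: "range D \<subseteq> sets M" using Dm1 by auto
        have "decseq D" unfolding D_def U_def decseq_def
        proof (clarify)
          fix m n x assume "m \<le> n" "infdist x A < 1 / real (Suc n)"
          moreover have "1 / real (Suc n) \<le> 1 / real (Suc m)" using \<open>m \<le> n\<close> by (simp add: frac_le)
          ultimately show "infdist x A < 1 / real (Suc m)" by linarith
        qed
        have "(\<Inter>i. D i) = {}"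
        proof safe
          fix x assume x: "x \<in> (\<Inter>i. D i)"
          then have "x \<notin> A" by (auto simp: D_def)
          have "infdist x A \<le> 0"
          proof (rule field_le_epsilon[where x="infdist x A" and y=0, simplified])
            fix d :: real assume "d > 0"
            then obtain n where n: "1 / real (Suc n) < d"
              using nat_approx_posE by blast
            have "x \<in> D n" using x by blast
            then have "infdist x A < 1 / real (Suc n)" by (simp add: D_def U_def)
            then show "infdist x A \<le> d" using n by linarith
          qed
          then have "infdist x A = 0" using infdist_nonneg[of x A] by linarith
          then have "x \<in> A" using in_closed_iff_infdist_zero[OF cA False] by simp
          then show "x \<in> {}" using \<open>x \<notin> A\<close> by simp
        qed
        then have "(\<lambda>n. measure M (D n)) \<longlonglongrightarrow> 0"
          using finite_Lim_measure_decseq[OF Dm \<open>decseq D\<close>] by simp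
        then have "eventually (\<lambda>n. measure M (D n) < e) sequentially"
          using e by (rule order_tendstoD(2))
        then obtain n where n: "measure M (D n) < e" by (auto simp: eventually_sequentially)
        have AU: "A \<subseteq> U n" by (auto simp: U_def)
        have "measure M (U n \<inter> X - A) < e" using n by (simp add: D_def)
        then show ?thesis using cA oU[of n] AU by blast
      qed
    qed
  next
    case Empty
    show ?case unfolding regset_def by (auto intro!: exI[of _ "{}"])
  next
    case (Compl a)
    have "X \<inter> (UNIV - a) = X - (X \<inter> a)" by auto
    show ?case unfolding regset_def
    proof (intro conjI allI impI)
      show "X \<inter> (UNIV - a) \<subseteq> X" by auto
      fix e :: real assume e: "e > 0"
      obtain C U where CU: "closed C" "C \<subseteq> X \<inter> a" "open U" "X \<inter> a \<subseteq> U" "measure M (U \<inter> X - C) < e"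
        using Compl(2) e unfolding regset_def by blast
      have eq: "(- C) \<inter> X - (X - U) = U \<inter> X - C" by auto
      show "\<exists>C U. closed C \<and> C \<subseteq> X \<inter> (UNIV - a) \<and> open U \<and> X \<inter> (UNIV - a) \<subseteq> U \<and> measure M (U \<inter> X - C) < e"
      proof (intro exI conjI)
        show "closed (X - U)" using cX CU(3) by (rule closed_Diff)
        show "X - U \<subseteq> X \<inter> (UNIV - a)" using CU(4) by blast
        show "open (- C)" using CU(1) by (rule open_Compl)
        show "X \<inter> (UNIV - a) \<subseteq> - C" using CU(2) by blast
        show "measure M (- C \<inter> X - (X - U)) < e" unfolding eq by (rule CU(5))
      qed
    qed
  next
    case (Union A)
    show ?case unfolding regset_def
    proof (intro conjI allI impI)
      show "X \<inter> \<Union> (range A) \<subseteq> X" by auto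
      fix e :: real assume e: "e > 0"
      have e2: "e / 2 > 0" using e by simp
      define AA where "AA i = X \<inter> A i" for i
      have AAm: "AA i \<in> sets M" for i
        using Union(1)[of i] by (auto simp: AA_def intro!: meas simp: borel_eq_closed)
      have "\<forall>i. \<exists>C U. closed C \<and> C \<subseteq> AA i \<and> open U \<and> AA i \<subseteq> U \<and> measure M (U \<inter> X - C) < e / 4 * (1/2)^i"
      proof
        fix i
        have "e / 4 * (1/2)^i > 0" using e by simp
        then show "\<exists>C U. closed C \<and> C \<subseteq> AA i \<and> open U \<and> AA i \<subseteq> U \<and> measure M (U \<inter> X - C) < e / 4 * (1/2)^i"
          using Union(2)[of i] unfolding regset_def AA_def by blast
      qed
      then obtain C U where CU: "\<And>i. closed (C i)" "\<And>i. C i \<subseteq> AA i" "\<And>i. open (U i)"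
         "\<And>i. AA i \<subseteq> U i" "\<And>i. measure M (U i \<inter> X - C i) < e / 4 * (1/2)^i"
        by metis
      have CX: "C i \<subseteq> X" for i using CU(2)[of i] by (auto simp: AA_def)
      define W where "W i = U i \<inter> X - C i" for i
      have Wm: "W i \<in> sets M" for i
      proof -
        have "W i = (X \<inter> U i) - C i" unfolding W_def by blast
        then show ?thesis using measo[OF CU(3)] measc[OF CU(1) CX] by (simp add: sets.Diff)
      qed
      have sumg: "summable (\<lambda>i. e / 4 * (1/2::real)^i)" by simp
      have sumW: "summable (\<lambda>i. measure M (W i))"
        by (rule summable_comparison_test'[OF sumg, of 0]) (use CU(5) in \<open>auto simp: W_def less_imp_le\<close>)
      have "measure M (\<Union>i. W i) \<le> (\<Sum>i. measure M (W i))"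
        using finite_measure_subadditive_countably[OF _ sumW] Wm by auto
      also have "\<dots> \<le> (\<Sum>i. e / 4 * (1/2::real)^i)"
        by (rule suminf_le[OF _ sumW sumg]) (use CU(5) in \<open>auto simp: W_def less_imp_le\<close>)
      also have "(\<Sum>i. e / 4 * (1/2::real)^i) = e / 2"
      proof -
        have g2: "(\<Sum>i. (1/2::real)^i) = 2" using suminf_geometric[of "1/2::real"] by simp
        have "(\<Sum>i. e / 4 * (1/2::real)^i) = e / 4 * (\<Sum>i. (1/2::real)^i)"
          by (rule suminf_mult) simp
        then show ?thesis using g2 by simp
      qed
      finally have W1: "measure M (\<Union>i. W i) \<le> e / 2" .
      define AN where "AN n = (\<Union>i<n. AA i)" for n
      have ANm: "range AN \<subseteq> sets M" unfolding AN_def using AAm by auto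
      have "incseq AN" unfolding AN_def incseq_def by (auto intro: less_le_trans)
      have UAN: "(\<Union>n. AN n) = (\<Union>i. AA i)" unfolding AN_def by auto
      have "(\<lambda>n. measure M (AN n)) \<longlonglongrightarrow> measure M (\<Union>i. AA i)"
        using finite_Lim_measure_incseq[OF ANm \<open>incseq AN\<close>] UAN by simp
      then obtain N where N: "measure M (\<Union>i. AA i) - measure M (AN N) < e / 2"
      proof -
        have "eventually (\<lambda>n. dist (measure M (AN n)) (measure M (\<Union>i. AA i)) < e / 2) sequentially"
          using \<open>(\<lambda>n. measure M (AN n)) \<longlonglongrightarrow> _\<close> e2 unfolding tendsto_iff by blast
        then obtain N where "dist (measure M (AN N)) (measure M (\<Union>i. AA i)) < e / 2"
          using eventually_sequentially by auto
        then have "measure M (\<Union>i. AA i) - measure M (AN N) < e / 2" unfolding dist_real_def by linarith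
        then show ?thesis by (rule that)
      qed
      have UAAm: "(\<Union>i. AA i) \<in> sets M" using AAm by auto
      have sub: "AN N \<subseteq> (\<Union>i. AA i)" by (auto simp: AN_def)
      have W2: "measure M ((\<Union>i. AA i) - AN N) < e / 2"
        using N finite_measure_Diff[OF UAAm ANm[THEN subsetD, OF rangeI] sub] by simp
      define CC where "CC = (\<Union>i<N. C i)"
      define UU where "UU = (\<Union>i. U i)"
      have cCC: "closed CC" unfolding CC_def using CU(1) by (intro closed_UN) auto
      have oUU: "open UU" unfolding UU_def using CU(3) by auto
      have CCsub: "CC \<subseteq> X \<inter> \<Union> (range A)" unfolding CC_def using CU(2) by (auto simp: AA_def)
      have UUsup: "X \<inter> \<Union> (range A) \<subseteq> UU" unfolding UU_def using CU(4) by (auto simp: AA_def)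
      have incl: "UU \<inter> X - CC \<subseteq> (\<Union>i. W i) \<union> ((\<Union>i. AA i) - AN N)"
      proof
        fix x assume x: "x \<in> UU \<inter> X - CC"
        then obtain i where xi: "x \<in> U i" "x \<in> X" by (auto simp: UU_def)
        show "x \<in> (\<Union>i. W i) \<union> ((\<Union>i. AA i) - AN N)"
        proof (cases "x \<in> C i")
          case False then show ?thesis using xi by (auto simp: W_def)
        next
          case True
          then have xA: "x \<in> AA i" using CU(2) by auto
          show ?thesis
          proof (cases "x \<in> AN N")
            case False then show ?thesis using xA by auto
          next
            case True
            then obtain j where j: "j < N" "x \<in> AA j" by (auto simp: AN_def)
            then have "x \<notin> C j" using x by (auto simp: CC_def)
            then have "x \<in> W j" using j CU(4)[of j] xi by (auto simp: W_def)
            then show ?thesis by auto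
          qed
        qed
      qed
      have Um: "(\<Union>i. W i) \<in> sets M" using Wm by auto
      have Dm: "(\<Union>i. AA i) - AN N \<in> sets M" using UAAm ANm by auto
      have "measure M (UU \<inter> X - CC) \<le> measure M ((\<Union>i. W i) \<union> ((\<Union>i. AA i) - AN N))"
        by (rule finite_measure_mono[OF incl]) (use Um Dm in auto)
      also have "\<dots> \<le> measure M (\<Union>i. W i) + measure M ((\<Union>i. AA i) - AN N)"
        by (rule measure_Un_le) (use Um Dm in auto)
      finally have "measure M (UU \<inter> X - CC) < e" using W1 W2 by linarith
      then show "\<exists>C U. closed C \<and> C \<subseteq> X \<inter> \<Union> (range A) \<and> open U \<and> X \<inter> \<Union> (range A) \<subseteq> U \<and> measure M (U \<inter> X - C) < e"
        using cCC oUU CCsub UUsup by blast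
    qed
  qed
qed

lemma closed_inner_regular:
  fixes M :: "'x::metric_space measure"
  assumes fm: "finite_measure M" and sM: "sets M = sets (restrict_space borel X)" and cX: "closed X"
    and A: "A \<in> sets M" and e: "e > 0"
  shows "\<exists>C. closed C \<and> C \<subseteq> A \<and> measure M A - measure M C < e"
proof -
  interpret finite_measure M by fact
  obtain B where B: "B \<in> sets borel" "A = X \<inter> B" using A by (auto simp: sM sets_restrict_space)
  have "B \<in> sigma_sets UNIV (Collect closed)" using B(1) by (simp add: borel_eq_closed)
  then have "regset M X A" using regular_closed_aux[OF fm sM cX] B(2) by simp
  then obtain C U where CU: "closed C" "C \<subseteq> A" "open U" "A \<subseteq> U" "measure M (U \<inter> X - C) < e"
    using e unfolding regset_def by blast
  have AX: "A \<subseteq> X" using B by auto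
  have Cm: "C \<in> sets M" using CU(1,2) AX B by (auto simp: sM sets_restrict_space intro!: image_eqI[of _ _ C])
  have XU: "X \<inter> U \<in> sets M"
    using CU(3) by (auto simp: sM sets_restrict_space intro!: image_eqI[of _ _ U])
  have "U \<inter> X - C = (X \<inter> U) - C" by auto
  then have Um: "U \<inter> X - C \<in> sets M" using XU Cm by (simp add: sets.Diff)
  have "measure M A - measure M C = measure M (A - C)"
    using finite_measure_Diff[OF A Cm CU(2)] by simp
  also have "\<dots> \<le> measure M (U \<inter> X - C)"
    by (rule finite_measure_mono[OF _ Um]) (use CU AX in auto)
  finally show ?thesis using CU by (intro exI[of _ C]) auto
qed



lemma cont_meas:
  fixes f :: "'x::metric_space \<Rightarrow> real"
  assumes "sets K = sets (restrict_space borel X)" "continuous_on X f"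
  shows "f \<in> borel_measurable K"
  using borel_measurable_continuous_on_restrict[OF assms(2)] measurable_cong_sets[OF assms(1) refl] by blast

lemma closed_approx_tendsto:
  fixes K :: "'x::metric_space measure"
  assumes fK: "finite_measure K" and sK: "sets K = sets (restrict_space borel X)"
    and cC: "closed C" and CX: "C \<subseteq> X" and Cne: "C \<noteq> {}" and cX: "closed X"
  shows "(\<lambda>n. integral\<^sup>L K (\<lambda>x. max 0 (1 - real (Suc n) * infdist x C))) \<longlonglongrightarrow> measure K C"
proof -
  interpret finite_measure K by fact
  have spK: "space K = X" using sets_eq_imp_space_eq[OF sK] by (simp add: space_restrict_space)
  have Cm: "C \<in> sets K" unfolding sK sets_restrict_space using CX
    by (intro image_eqI[of _ _ C]) (auto simp: cC borel_closed)
  have cont: "continuous_on X (\<lambda>x. max 0 (1 - real (Suc n) * infdist x C))" for n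
    by (intro continuous_intros)
  have "(\<lambda>n. integral\<^sup>L K (\<lambda>x. max 0 (1 - real (Suc n) * infdist x C))) \<longlonglongrightarrow> integral\<^sup>L K (indicator C)"
  proof (rule integral_dominated_convergence[where w="\<lambda>_. 1"])
    show "indicator C \<in> borel_measurable K" using Cm by simp
    show "(\<lambda>x. max 0 (1 - real (Suc n) * infdist x C)) \<in> borel_measurable K" for n
      by (rule cont_meas[OF sK cont])
    show "integrable K (\<lambda>_. 1::real)" by simp
    show "AE x in K. norm (max 0 (1 - real (Suc n) * infdist x C)) \<le> 1" for n
      using infdist_nonneg[of _ C] by (intro AE_I2) (auto simp: mult_nonneg_nonneg)
    show "AE x in K. (\<lambda>n. max 0 (1 - real (Suc n) * infdist x C)) \<longlonglongrightarrow> indicator C x"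
    proof (intro AE_I2)
      fix x
      show "(\<lambda>n. max 0 (1 - real (Suc n) * infdist x C)) \<longlonglongrightarrow> indicator C x"
      proof (cases "x \<in> C")
        case True then show ?thesis by simp
      next
        case False
        then have d: "infdist x C > 0"
          using in_closed_iff_infdist_zero[OF cC Cne, of x] infdist_nonneg[of x C] by linarith
        obtain N :: nat where N: "1 / infdist x C < real N" using reals_Archimedean2 by blast
        have "eventually (\<lambda>n. max 0 (1 - real (Suc n) * infdist x C) = 0) sequentially"
          unfolding eventually_sequentially
        proof (intro exI[of _ N] allI impI)
          fix n assume "N \<le> n"
          then have "real N \<le> real (Suc n)" by simp
          then have "1 / infdist x C < real (Suc n)" using N by linarith
          then have "1 < real (Suc n) * infdist x C" using d by (simp add: field_simps)
          then show "max 0 (1 - real (Suc n) * infdist x C) = 0" by simp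
        qed
        then show ?thesis using False by (simp add: tendsto_eventually)
      qed
    qed
  qed
  then show ?thesis using Cm spK Int_absorb2[OF CX] by simp
qed

lemma measure_ineq_from_integrals:
  fixes P1 P2 Q1 Q2 :: "'x::metric_space measure"
  assumes fin: "finite_measure P1" "finite_measure P2" "finite_measure Q1" "finite_measure Q2"
    and ss: "sets P1 = sets (restrict_space borel X)" "sets P2 = sets (restrict_space borel X)"
       "sets Q1 = sets (restrict_space borel X)" "sets Q2 = sets (restrict_space borel X)"
    and cX: "closed X"
    and H: "\<And>f::'x \<Rightarrow> real. continuous_on X f \<Longrightarrow> (\<And>x. x \<in> X \<Longrightarrow> 0 \<le> f x \<and> f x \<le> 1) \<Longrightarrow>
        integral\<^sup>L P1 f + integral\<^sup>L P2 f \<le> integral\<^sup>L Q1 f + integral\<^sup>L Q2 f"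
    and A: "A \<in> sets (restrict_space borel X)"
  shows "measure P1 A + measure P2 A \<le> measure Q1 A + measure Q2 A"
proof -
  have closedcase: "measure P1 C + measure P2 C \<le> measure Q1 C + measure Q2 C"
    if cC: "closed C" and CX: "C \<subseteq> X" for C
  proof (cases "C = {}")
    case True then show ?thesis by simp
  next
    case False
    let ?f = "\<lambda>n x. max 0 (1 - real (Suc n) * infdist x C)"
    have lim: "(\<lambda>n. integral\<^sup>L K (?f n)) \<longlonglongrightarrow> measure K C"
      if "finite_measure K" "sets K = sets (restrict_space borel X)" for K
      by (rule closed_approx_tendsto[OF that cC CX False cX])
    show ?thesis
    proof (rule LIMSEQ_le)
      show "(\<lambda>n. integral\<^sup>L P1 (?f n) + integral\<^sup>L P2 (?f n)) \<longlonglongrightarrow> measure P1 C + measure P2 C"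
        by (intro tendsto_add lim fin ss)
      show "(\<lambda>n. integral\<^sup>L Q1 (?f n) + integral\<^sup>L Q2 (?f n)) \<longlonglongrightarrow> measure Q1 C + measure Q2 C"
        by (intro tendsto_add lim fin ss)
      show "\<exists>N. \<forall>n\<ge>N. integral\<^sup>L P1 (?f n) + integral\<^sup>L P2 (?f n) \<le> integral\<^sup>L Q1 (?f n) + integral\<^sup>L Q2 (?f n)"
      proof (intro exI[of _ 0] allI impI)
        fix n :: nat
        show "integral\<^sup>L P1 (?f n) + integral\<^sup>L P2 (?f n) \<le> integral\<^sup>L Q1 (?f n) + integral\<^sup>L Q2 (?f n)"
        proof -
          have c: "continuous_on X (?f n)" by (intro continuous_intros)
          have b: "0 \<le> ?f n x \<and> ?f n x \<le> 1" if "x \<in> X" for x using infdist_nonneg[of x C] by auto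
          show ?thesis using H[of "?f n", OF c b] by simp
        qed
      qed
    qed
  qed
  show ?thesis
  proof (rule field_le_epsilon)
    fix e :: real assume e: "0 < e"
    have e2: "e / 2 > 0" using e by simp
    obtain C1 where C1: "closed C1" "C1 \<subseteq> A" "measure P1 A - measure P1 C1 < e / 2"
      using closed_inner_regular[OF fin(1) ss(1) cX _ e2] A ss(1) by metis
    obtain C2 where C2: "closed C2" "C2 \<subseteq> A" "measure P2 A - measure P2 C2 < e / 2"
      using closed_inner_regular[OF fin(2) ss(2) cX _ e2] A ss(2) by metis
    have AX: "A \<subseteq> X" using A by (auto simp: sets_restrict_space)
    let ?C = "C1 \<union> C2"
    have cC: "closed ?C" using C1 C2 by auto
    have CA: "?C \<subseteq> A" using C1 C2 by auto
    have Cm: "?C \<in> sets (restrict_space borel X)"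
      unfolding sets_restrict_space using CA AX
      by (intro image_eqI[of _ _ ?C]) (auto simp: cC borel_closed)
    have m1: "measure P1 C1 \<le> measure P1 ?C"
      by (rule finite_measure.finite_measure_mono[OF fin(1)]) (use Cm ss in auto)
    have m2: "measure P2 C2 \<le> measure P2 ?C"
      by (rule finite_measure.finite_measure_mono[OF fin(2)]) (use Cm ss in auto)
    have m3: "measure Q1 ?C \<le> measure Q1 A"
      by (rule finite_measure.finite_measure_mono[OF fin(3)]) (use CA A ss in auto)
    have m4: "measure Q2 ?C \<le> measure Q2 A"
      by (rule finite_measure.finite_measure_mono[OF fin(4)]) (use CA A ss in auto)
    have "measure P1 ?C + measure P2 ?C \<le> measure Q1 ?C + measure Q2 ?C"
      by (rule closedcase[OF cC]) (use CA AX in auto)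
    then show "measure P1 A + measure P2 A \<le> measure Q1 A + measure Q2 A + e"
      using C1 C2 m1 m2 m3 m4 by linarith
  qed
qed



definition sepset :: "('g \<Rightarrow> 'x::metric_space \<Rightarrow> 'x) \<Rightarrow> 'x set \<Rightarrow> 'g set \<Rightarrow> real \<Rightarrow> 'x set \<Rightarrow> bool" where
  "sepset act X F eps E \<longleftrightarrow> finite E \<and> E \<subseteq> X \<and> (\<forall>x\<in>E. \<forall>y\<in>E. x \<noteq> y \<longrightarrow> dF act F x y > eps)"

lemma PF_alt: "PF act X f F eps = Sup {(\<Sum>x\<in>E. exp (SF act F f x)) | E. sepset act X F eps E}"
  unfolding PF_def sepset_def by simp

lemma GS_facts:
  assumes "G_system act X"
  shows "compact X" "X \<noteq> {}" "\<And>g. continuous_on X (act g)" "\<And>g x. x \<in> X \<Longrightarrow> act g x \<in> X"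
    "\<And>x. x \<in> X \<Longrightarrow> act 0 x = x" "\<And>g h x. x \<in> X \<Longrightarrow> act (g + h) x = act g (act h x)"
  using assms unfolding G_system_def by auto

lemma sep_card_bound:
  fixes act :: "'g::group_add \<Rightarrow> 'x::metric_space \<Rightarrow> 'x"
  assumes GS: "G_system act X" and fF: "finite F" and neF: "F \<noteq> {}" and eps: "eps > 0"
  shows "\<exists>N. \<forall>E. sepset act X F eps E \<longrightarrow> card E \<le> N"
proof -
  note gs = GS_facts[OF GS]
  have "\<forall>g\<in>F. \<exists>d>0. \<forall>x\<in>X. \<forall>y\<in>X. dist y x < d \<longrightarrow> dist (act g y) (act g x) < eps"
  proof
    fix g assume "g \<in> F"
    have "uniformly_continuous_on X (act g)" using compact_uniformly_continuous gs(1,3) by blast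
    then show "\<exists>d>0. \<forall>x\<in>X. \<forall>y\<in>X. dist y x < d \<longrightarrow> dist (act g y) (act g x) < eps"
      unfolding uniformly_continuous_on_def using eps by blast
  qed
  then obtain d where d: "\<And>g. g \<in> F \<Longrightarrow> d g > 0"
    "\<And>g x y. g \<in> F \<Longrightarrow> x \<in> X \<Longrightarrow> y \<in> X \<Longrightarrow> dist y x < d g \<Longrightarrow> dist (act g y) (act g x) < eps"
    by metis
  define del where "del = Min (d ` F)"
  have del: "del > 0" unfolding del_def using fF neF d(1) by (simp add: Min_gr_iff)
  have deld: "g \<in> F \<Longrightarrow> del \<le> d g" for g unfolding del_def using fF by simp
  obtain k where k: "finite k" "k \<subseteq> X" "X \<subseteq> (\<Union>c\<in>k. ball c (del / 2))"
    using seq_compact_imp_totally_bounded[OF compact_imp_seq_compact[OF gs(1)]] del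
    by (metis half_gt_zero)
  show ?thesis
  proof (intro exI[of _ "card k"] allI impI)
    fix E assume E: "sepset act X F eps E"
    then have E': "finite E" "E \<subseteq> X" "\<And>x y. x \<in> E \<Longrightarrow> y \<in> E \<Longrightarrow> x \<noteq> y \<Longrightarrow> dF act F x y > eps"
      unfolding sepset_def by auto
    define phi where "phi y = (SOME c. c \<in> k \<and> y \<in> ball c (del / 2))" for y
    have phi: "phi y \<in> k \<and> y \<in> ball (phi y) (del / 2)" if "y \<in> X" for y
    proof -
      have "\<exists>c. c \<in> k \<and> y \<in> ball c (del / 2)" using k(3) that by blast
      then show ?thesis unfolding phi_def by (rule someI_ex)
    qed
    have "inj_on phi E"
    proof (rule inj_onI, rule ccontr)
      fix y z assume yz: "y \<in> E" "z \<in> E" "phi y = phi z" "y \<noteq> z"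
      have yX: "y \<in> X" "z \<in> X" using yz E'(2) by auto
      have "dist z y < del"
        using phi[OF yX(1)] phi[OF yX(2)] yz(3) dist_triangle[of z y "phi y"]
        by (auto simp: dist_commute)
      then have lt: "dist (act g z) (act g y) < eps" if "g \<in> F" for g
        using d(2)[OF that yX(1) yX(2)] deld[OF that] by linarith
      have "dF act F z y < eps" unfolding dF_def using fF neF lt by (simp add: Max_less_iff)
      moreover have "dF act F z y > eps" using E'(3)[OF yz(2) yz(1)] yz(4) by auto
      ultimately show False by linarith
    qed
    moreover have "phi ` E \<subseteq> k" using phi E'(2) by auto
    ultimately show "card E \<le> card k" using card_inj_on_le k(1) by blast
  qed
qed

lemma bound_on_X:
  fixes u :: "'x::metric_space \<Rightarrow> real"
  assumes "compact X" "continuous_on X u"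
  obtains B where "B \<ge> 0" "\<And>x. x \<in> X \<Longrightarrow> \<bar>u x\<bar> \<le> B"
proof -
  have "bounded (u ` X)" using compact_continuous_image[OF assms(2,1)] compact_imp_bounded by blast
  then obtain B where "\<And>x. x \<in> X \<Longrightarrow> \<bar>u x\<bar> \<le> B" unfolding bounded_iff by auto
  moreover have "max B 0 \<ge> 0" by simp
  ultimately show ?thesis using that[of "max B 0"] by force
qed

lemma SF_in_X:
  assumes GS: "G_system act X" and "x \<in> X" and B: "\<And>x. x \<in> X \<Longrightarrow> \<bar>u x\<bar> \<le> B"
  shows "\<bar>SF act F u x\<bar> \<le> real (card F) * B"
proof -
  have "\<bar>SF act F u x\<bar> \<le> (\<Sum>g\<in>F. \<bar>u (act g x)\<bar>)" unfolding SF_def by (rule sum_abs)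
  also have "\<dots> \<le> (\<Sum>g\<in>F. B)" by (rule sum_mono) (use B GS_facts(4)[OF GS] assms(2) in auto)
  finally show ?thesis by simp
qed

lemma PF_set_props:
  fixes act :: "'g::group_add \<Rightarrow> 'x::metric_space \<Rightarrow> 'x"
  assumes GS: "G_system act X" and fF: "finite F" and neF: "F \<noteq> {}" and eps: "eps > 0"
    and u: "continuous_on X u"
  shows "bdd_above {(\<Sum>x\<in>E. exp (SF act F u x)) | E. sepset act X F eps E}"
    "{(\<Sum>x\<in>E. exp (SF act F u x)) | E. sepset act X F eps E} \<noteq> {}"
proof -
  note gs = GS_facts[OF GS]
  obtain N where N: "\<And>E. sepset act X F eps E \<Longrightarrow> card E \<le> N"
    using sep_card_bound[OF GS fF neF eps] by blast
  obtain B where B: "B \<ge> 0" "\<And>x. x \<in> X \<Longrightarrow> \<bar>u x\<bar> \<le> B" using bound_on_X[OF gs(1) u] by blast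
  have "(\<Sum>x\<in>E. exp (SF act F u x)) \<le> real N * exp (real (card F) * B)" if E: "sepset act X F eps E" for E
  proof -
    have EX: "E \<subseteq> X" using E by (simp add: sepset_def)
    have "(\<Sum>x\<in>E. exp (SF act F u x)) \<le> (\<Sum>x\<in>E. exp (real (card F) * B))"
    proof (rule sum_mono)
      fix x assume "x \<in> E"
      then have "\<bar>SF act F u x\<bar> \<le> real (card F) * B" using SF_in_X[OF GS _ B(2)] EX by auto
      then show "exp (SF act F u x) \<le> exp (real (card F) * B)" by simp
    qed
    also have "\<dots> = real (card E) * exp (real (card F) * B)" by simp
    also have "\<dots> \<le> real N * exp (real (card F) * B)"
      using N[OF E] by (intro mult_right_mono) auto
    finally show ?thesis .
  qed
  then show "bdd_above {(\<Sum>x\<in>E. exp (SF act F u x)) | E. sepset act X F eps E}"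
    by (intro bdd_aboveI[of _ "real N * exp (real (card F) * B)"]) auto
  have "sepset act X F eps {}" by (simp add: sepset_def)
  then show "{(\<Sum>x\<in>E. exp (SF act F u x)) | E. sepset act X F eps E} \<noteq> {}" by blast
qed

lemma PF_ge:
  fixes act :: "'g::group_add \<Rightarrow> 'x::metric_space \<Rightarrow> 'x"
  assumes GS: "G_system act X" and fF: "finite F" and neF: "F \<noteq> {}" and eps: "eps > 0"
    and u: "continuous_on X u" and x: "x \<in> X"
  shows "exp (SF act F u x) \<le> PF act X u F eps"
proof -
  have "sepset act X F eps {x}" using x by (simp add: sepset_def)
  then have "exp (SF act F u x) \<in> {(\<Sum>x\<in>E. exp (SF act F u x)) | E. sepset act X F eps E}"
    by (intro CollectI exI[of _ "{x}"]) auto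
  then show ?thesis unfolding PF_alt by (rule cSup_upper) (rule PF_set_props[OF assms(1-5)])
qed

lemma PF_pos:
  fixes act :: "'g::group_add \<Rightarrow> 'x::metric_space \<Rightarrow> 'x"
  assumes GS: "G_system act X" and fF: "finite F" and neF: "F \<noteq> {}" and eps: "eps > 0"
    and u: "continuous_on X u"
  shows "0 < PF act X u F eps"
proof -
  obtain x where "x \<in> X" using GS_facts(2)[OF GS] by blast
  from PF_ge[OF assms this] show ?thesis using exp_gt_zero[of "SF act F u x"] by linarith
qed

lemma PF_mono:
  fixes act :: "'g::group_add \<Rightarrow> 'x::metric_space \<Rightarrow> 'x"
  assumes GS: "G_system act X" and fF: "finite F" and neF: "F \<noteq> {}" and eps: "eps > 0"
    and u: "continuous_on X u" and v: "continuous_on X v"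
    and le: "\<And>x. x \<in> X \<Longrightarrow> SF act F u x \<le> SF act F v x + c"
  shows "PF act X u F eps \<le> exp c * PF act X v F eps"
  unfolding PF_alt[of act X u] 
proof (rule cSup_least)
  show "{(\<Sum>x\<in>E. exp (SF act F u x)) | E. sepset act X F eps E} \<noteq> {}"
    by (rule PF_set_props[OF GS fF neF eps u])
  fix s assume "s \<in> {(\<Sum>x\<in>E. exp (SF act F u x)) | E. sepset act X F eps E}"
  then obtain E where E: "sepset act X F eps E" "s = (\<Sum>x\<in>E. exp (SF act F u x))" by blast
  have EX: "E \<subseteq> X" using E by (simp add: sepset_def)
  have "s \<le> (\<Sum>x\<in>E. exp c * exp (SF act F v x))"
    unfolding E(2)
  proof (rule sum_mono)
    fix x assume "x \<in> E"
    then have "SF act F u x \<le> c + SF act F v x" using le EX by force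
    then have "exp (SF act F u x) \<le> exp (c + SF act F v x)" by simp
    then show "exp (SF act F u x) \<le> exp c * exp (SF act F v x)" by (simp add: exp_add)
  qed
  also have "\<dots> = exp c * (\<Sum>x\<in>E. exp (SF act F v x))" by (simp add: sum_distrib_left)
  also have "(\<Sum>x\<in>E. exp (SF act F v x)) \<le> PF act X v F eps"
    unfolding PF_alt using E(1)
    by (intro cSup_upper PF_set_props[OF GS fF neF eps v]) blast
  then have "exp c * (\<Sum>x\<in>E. exp (SF act F v x)) \<le> exp c * PF act X v F eps" by simp
  finally show "s \<le> exp c * PF act X v F eps" .
qed



definition pn :: "('g \<Rightarrow> 'x::metric_space \<Rightarrow> 'x) \<Rightarrow> 'x set \<Rightarrow> ('x \<Rightarrow> real) \<Rightarrow> (nat \<Rightarrow> 'g set) \<Rightarrow> real \<Rightarrow> nat \<Rightarrow> real" where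
  "pn act X u Fs eps n = ln (PF act X u (Fs n) eps) / real (card (Fs n))"

lemma pressure_alt: "pressure act X u Fs eps = limsup (\<lambda>n. ereal (pn act X u Fs eps n))"
  unfolding pressure_def pn_def by simp

lemma pressure_mono:
  fixes act :: "'g::group_add \<Rightarrow> 'x::metric_space \<Rightarrow> 'x"
  assumes GS: "G_system act X" and FS: "\<And>n. finite (Fs n) \<and> Fs n \<noteq> {}" and eps: "eps > 0"
    and u: "continuous_on X u" and v: "continuous_on X v"
    and le: "\<And>n x. x \<in> X \<Longrightarrow> SF act (Fs n) u x \<le> SF act (Fs n) v x + c n"
    and lim: "(\<lambda>n. c n / real (card (Fs n))) \<longlonglongrightarrow> a"
  shows "pressure act X u Fs eps \<le> pressure act X v Fs eps + ereal a"
proof -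
  have pt: "pn act X u Fs eps n \<le> c n / real (card (Fs n)) + pn act X v Fs eps n" for n
  proof -
    have fF: "finite (Fs n)" "Fs n \<noteq> {}" using FS by auto
    have cpos: "real (card (Fs n)) > 0" using fF by (simp add: card_gt_0_iff)
    have pu: "PF act X u (Fs n) eps > 0" by (rule PF_pos[OF GS fF eps u])
    have pv: "PF act X v (Fs n) eps > 0" by (rule PF_pos[OF GS fF eps v])
    have "PF act X u (Fs n) eps \<le> exp (c n) * PF act X v (Fs n) eps"
      by (rule PF_mono[OF GS fF eps u v le])
    then have "ln (PF act X u (Fs n) eps) \<le> ln (exp (c n) * PF act X v (Fs n) eps)"
      using pu pv by simp
    also have "\<dots> = c n + ln (PF act X v (Fs n) eps)" using pv by (simp add: ln_mult)
    finally have "ln (PF act X u (Fs n) eps) / real (card (Fs n)) \<le> (c n + ln (PF act X v (Fs n) eps)) / real (card (Fs n))"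
      using cpos by (simp add: divide_right_mono)
    then show ?thesis unfolding pn_def by (simp add: add_divide_distrib)
  qed
  have "pressure act X u Fs eps \<le> limsup (\<lambda>n. ereal (c n / real (card (Fs n))) + ereal (pn act X v Fs eps n))"
    unfolding pressure_alt by (rule Limsup_mono) (use pt in auto)
  also have "\<dots> = ereal a + pressure act X v Fs eps"
    unfolding pressure_alt by (rule ereal_limsup_lim_add) (use lim in auto)
  finally show ?thesis by (simp add: add.commute)
qed

lemma pressure_lower:
  fixes act :: "'g::group_add \<Rightarrow> 'x::metric_space \<Rightarrow> 'x"
  assumes GS: "G_system act X" and FS: "\<And>n. finite (Fs n) \<and> Fs n \<noteq> {}" and eps: "eps > 0"
    and u: "continuous_on X u"
    and ex: "\<And>n. \<exists>x\<in>X. real (card (Fs n)) * a \<le> SF act (Fs n) u x"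
  shows "ereal a \<le> pressure act X u Fs eps"
  unfolding pressure_alt
proof (rule le_Limsup)
  show "sequentially \<noteq> bot" by simp
  show "\<forall>\<^sub>F n in sequentially. ereal a \<le> ereal (pn act X u Fs eps n)"
  proof (intro always_eventually allI)
    fix n
    have fF: "finite (Fs n)" "Fs n \<noteq> {}" using FS by auto
    have cpos: "real (card (Fs n)) > 0" using fF by (simp add: card_gt_0_iff)
    obtain x where x: "x \<in> X" "real (card (Fs n)) * a \<le> SF act (Fs n) u x" using ex by blast
    have "exp (SF act (Fs n) u x) \<le> PF act X u (Fs n) eps" by (rule PF_ge[OF GS fF eps u x(1)])
    then have "SF act (Fs n) u x \<le> ln (PF act X u (Fs n) eps)"
      by (metis exp_gt_zero exp_le_cancel_iff exp_ln less_le_trans)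
    then have "real (card (Fs n)) * a \<le> ln (PF act X u (Fs n) eps)" using x(2) by linarith
    then have "a \<le> pn act X u Fs eps n" unfolding pn_def using cpos by (simp add: field_simps)
    then show "ereal a \<le> ereal (pn act X u Fs eps n)" by simp
  qed
qed

lemma ereal_div_add_real:
  fixes y :: ereal assumes "L > 0"
  shows "(y + ereal b) / ereal L = y / ereal L + ereal (b / L)"
  using assms by (cases y) (auto simp: add_divide_distrib)

lemma mdim_upper_le:
  assumes H: "\<And>e. 0 < e \<Longrightarrow> e < 1 \<Longrightarrow>
     pressure act X (\<lambda>x. u x * ln (1 / e)) Fs e \<le> pressure act X (\<lambda>x. v x * ln (1 / e)) Fs e + ereal (a * ln (1 / e))"
  shows "mdim_upper act X Fs u \<le> mdim_upper act X Fs v + ereal a"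
proof -
  have ev: "eventually (\<lambda>e. e \<in> {0<..<1::real}) (at_right 0)" by (rule eventually_at_right_real) simp
  have "mdim_upper act X Fs u \<le> Limsup (at_right 0) (\<lambda>e. pressure act X (\<lambda>x. v x * ln (1 / e)) Fs e / ereal (ln (1 / e)) + ereal a)"
    unfolding mdim_upper_def
  proof (rule Limsup_mono, rule eventually_mono[OF ev])
    fix e :: real assume e: "e \<in> {0<..<1}"
    then have L: "ln (1 / e) > 0" by simp
    have "pressure act X (\<lambda>x. u x * ln (1 / e)) Fs e / ereal (ln (1 / e)) \<le>
        (pressure act X (\<lambda>x. v x * ln (1 / e)) Fs e + ereal (a * ln (1 / e))) / ereal (ln (1 / e))"
      by (rule ereal_divide_right_mono) (use H e L in auto)
    also have "\<dots> = pressure act X (\<lambda>x. v x * ln (1 / e)) Fs e / ereal (ln (1 / e)) + ereal a"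
      using L by (simp add: ereal_div_add_real)
    finally show "pressure act X (\<lambda>x. u x * ln (1 / e)) Fs e / ereal (ln (1 / e)) \<le>
        pressure act X (\<lambda>x. v x * ln (1 / e)) Fs e / ereal (ln (1 / e)) + ereal a" .
  qed
  also have "\<dots> = mdim_upper act X Fs v + ereal a"
    unfolding mdim_upper_def by (rule Limsup_add_ereal_right) auto
  finally show ?thesis .
qed

lemma mdim_lower_ge:
  assumes H: "\<And>e. 0 < e \<Longrightarrow> e < 1 \<Longrightarrow> ereal (a * ln (1 / e)) \<le> pressure act X (\<lambda>x. u x * ln (1 / e)) Fs e"
  shows "ereal a \<le> mdim_lower act X Fs u"
  unfolding mdim_lower_def
proof (rule Liminf_bounded, rule eventually_mono[OF eventually_at_right_real[of 0 1]])
  show "(0::real) < 1" by simp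
  fix e :: real assume e: "e \<in> {0<..<1}"
  then have L: "ln (1 / e) > 0" by simp
  have "ereal a = ereal (a * ln (1 / e)) / ereal (ln (1 / e))" using L by simp
  also have "\<dots> \<le> pressure act X (\<lambda>x. u x * ln (1 / e)) Fs e / ereal (ln (1 / e))"
    by (rule ereal_divide_right_mono) (use H e L in auto)
  finally show "ereal a \<le> pressure act X (\<lambda>x. u x * ln (1 / e)) Fs e / ereal (ln (1 / e))" .
qed



lemma SF_scale: "SF act F (\<lambda>x. u x * L) x = SF act F u x * L"
  unfolding SF_def by (simp add: sum_distrib_right)

lemma SF_const: "SF act F (\<lambda>x. c) x = real (card F) * c"
  unfolding SF_def by simp

lemma FS_facts: "Folner_seq Fs \<Longrightarrow> finite (Fs n) \<and> Fs n \<noteq> {}"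
  unfolding Folner_seq_def by auto

lemma act_measurable:
  fixes act :: "'g::group_add \<Rightarrow> 'x::metric_space \<Rightarrow> 'x"
  assumes GS: "G_system act X" and sK: "sets K = sets (restrict_space borel X)"
  shows "act g \<in> measurable K K"
proof -
  note gs = GS_facts[OF GS]
  have "act g \<in> measurable (restrict_space borel X) borel"
    by (rule borel_measurable_continuous_on_restrict[OF gs(3)])
  then have "act g \<in> measurable (restrict_space borel X) (restrict_space borel X)"
    unfolding measurable_restrict_space2_iff using gs(4) by (auto simp: space_restrict_space)
  then show ?thesis using measurable_cong_sets[OF sK sK] by blast
qed

lemma mdim_le_D:
  fixes act :: "'g::group_add \<Rightarrow> 'x::metric_space \<Rightarrow> 'x"
  assumes GS: "G_system act X" and FS: "Folner_seq Fs"
    and u: "continuous_on X u"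
    and le: "\<And>n x. x \<in> X \<Longrightarrow> SF act (Fs n) u x \<le> c n"
    and lim: "(\<lambda>n. c n / real (card (Fs n))) \<longlonglongrightarrow> a"
  shows "mdim_upper act X Fs u \<le> mdim_upper act X Fs (\<lambda>_. 0) + ereal a"
proof (rule mdim_upper_le)
  fix e :: real assume e: "0 < e" "e < 1"
  define L where "L = ln (1 / e)"
  have FS': "\<And>n. finite (Fs n) \<and> Fs n \<noteq> {}" using FS_facts[OF FS] by blast
  have "pressure act X (\<lambda>x. u x * L) Fs e \<le> pressure act X (\<lambda>x. 0 * L) Fs e + ereal (a * L)"
  proof (rule pressure_mono[OF GS FS' e(1), where c="\<lambda>n. c n * L"])
    show "continuous_on X (\<lambda>x. u x * L)" using u by (intro continuous_intros)
    show "continuous_on X (\<lambda>x. 0 * L)" by simp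
    fix n x assume x: "x \<in> X"
    have L: "L > 0" using e by (simp add: L_def)
    show "SF act (Fs n) (\<lambda>x. u x * L) x \<le> SF act (Fs n) (\<lambda>x. 0 * L) x + c n * L"
      unfolding SF_scale using le[OF x, of n] L by (simp add: SF_def)
  next
    show "(\<lambda>n. c n * L / real (card (Fs n))) \<longlonglongrightarrow> a * L"
      using tendsto_mult_right[OF lim, of L] by (simp add: field_simps)
  qed
  then show "pressure act X (\<lambda>x. u x * ln (1 / e)) Fs e \<le> pressure act X (\<lambda>x. 0 * ln (1 / e)) Fs e + ereal (a * ln (1 / e))"
    by (simp add: L_def)
qed

lemma sum_translate_diff:
  fixes phi :: "'g::group_add \<Rightarrow> real"
  assumes fF: "finite F" and B: "\<And>k. \<bar>phi k\<bar> \<le> B"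
  shows "\<bar>(\<Sum>h\<in>F. phi (g + h)) - (\<Sum>h\<in>F. phi h)\<bar> \<le> B * real (card (sym_diff ((\<lambda>h. g + h) ` F) F))"
proof -
  define A where "A = (\<lambda>h. g + h) ` F"
  have fA: "finite A" using fF by (simp add: A_def)
  have "(\<Sum>h\<in>F. phi (g + h)) = (\<Sum>k\<in>A. phi k)"
    unfolding A_def by (subst sum.reindex) (auto simp: inj_on_def)
  moreover have "(\<Sum>k\<in>A. phi k) = (\<Sum>k\<in>A - F. phi k) + (\<Sum>k\<in>A \<inter> F. phi k)"
    using sum.subset_diff[of "A \<inter> F" A phi] fA by (simp add: Diff_Int2 Diff_Int_distrib2 Int_Diff Diff_Int)
  moreover have "(\<Sum>k\<in>F. phi k) = (\<Sum>k\<in>F - A. phi k) + (\<Sum>k\<in>A \<inter> F. phi k)"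
    using sum.subset_diff[of "A \<inter> F" F phi] fF by (simp add: Diff_Int2 Int_commute Diff_Int_distrib2 Int_Diff Diff_Int)
  ultimately have eq: "(\<Sum>h\<in>F. phi (g + h)) - (\<Sum>h\<in>F. phi h) = (\<Sum>k\<in>A - F. phi k) - (\<Sum>k\<in>F - A. phi k)"
    by simp
  have b1: "\<bar>\<Sum>k\<in>A - F. phi k\<bar> \<le> B * real (card (A - F))"
    using order_trans[OF sum_abs[of phi "A - F"] sum_mono[of "A - F" "\<lambda>k. \<bar>phi k\<bar>" "\<lambda>k. B"]] B by (simp add: mult.commute)
  have b2: "\<bar>\<Sum>k\<in>F - A. phi k\<bar> \<le> B * real (card (F - A))"
    using order_trans[OF sum_abs[of phi "F - A"] sum_mono[of "F - A" "\<lambda>k. \<bar>phi k\<bar>" "\<lambda>k. B"]] B by (simp add: mult.commute)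
  have "card (sym_diff A F) = card (A - F) + card (F - A)"
    unfolding sym_diff_def by (rule card_Un_disjoint) (use fA fF in auto)
  then show ?thesis unfolding eq A_def[symmetric] using b1 b2 by (simp add: distrib_left)
qed

lemma SF_translate_bound:
  fixes act :: "'g::group_add \<Rightarrow> 'x::metric_space \<Rightarrow> 'x"
  assumes GS: "G_system act X" and fF: "finite F" and B: "\<And>x. x \<in> X \<Longrightarrow> \<bar>f x\<bar> \<le> B" and x: "x \<in> X"
  shows "\<bar>SF act F (\<lambda>y. f (act g y) - f y) x\<bar> \<le> B * real (card (sym_diff ((\<lambda>h. g + h) ` F) F))"
proof -
  note gs = GS_facts[OF GS]
  define phi where "phi k = (if act k x \<in> X then f (act k x) else 0)" for k
  have pB: "\<bar>phi k\<bar> \<le> B" for k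
    using B[of "act k x"] B[OF x] by (auto simp: phi_def)
  have p1: "phi (g + h) = f (act g (act h x))" for h
  proof -
    have "phi (g + h) = f (act (g + h) x)" using gs(4)[OF x] by (simp add: phi_def)
    then show ?thesis using gs(6)[OF x, of g h] by simp
  qed
  have p2: "phi h = f (act h x)" for h using gs(4)[OF x] by (simp add: phi_def)
  have "SF act F (\<lambda>y. f (act g y) - f y) x = (\<Sum>h\<in>F. phi (g + h) - phi h)"
    unfolding SF_def by (intro sum.cong refl) (simp add: p2 gs(6)[OF x])
  then have "SF act F (\<lambda>y. f (act g y) - f y) x = (\<Sum>h\<in>F. phi (g + h)) - (\<Sum>h\<in>F. phi h)"
    by (simp add: sum_subtractf)
  then show ?thesis using sum_translate_diff[OF fF pB] by simp
qed



lemma int_cont: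
  fixes f :: "'x::metric_space \<Rightarrow> real"
  assumes "finite_measure K" "sets K = sets (restrict_space borel X)" "compact X" "continuous_on X f"
  shows "integrable K f"
proof -
  obtain B where B: "\<And>x. x \<in> X \<Longrightarrow> \<bar>f x\<bar> \<le> B" using bound_on_X[OF assms(3,4)] by blast
  have sp: "space K = X" using sets_eq_imp_space_eq[OF assms(2)] by (simp add: space_restrict_space)
  show ?thesis by (rule integrable_bounded_fm[OF assms(1) cont_meas[OF assms(2,4)], of B]) (use B sp in auto)
qed

lemma cont_act_comp:
  fixes act :: "'g::group_add \<Rightarrow> 'x::metric_space \<Rightarrow> 'x"
  assumes GS: "G_system act X" and f: "continuous_on X f"
  shows "continuous_on X (\<lambda>x. f (act g x))"
  using GS_facts[OF GS] by (intro continuous_on_compose2[OF f]) auto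

lemma cont_SF:
  fixes act :: "'g::group_add \<Rightarrow> 'x::metric_space \<Rightarrow> 'x"
  assumes GS: "G_system act X" and f: "continuous_on X f"
  shows "continuous_on X (SF act F f)"
proof -
  have "continuous_on X (\<lambda>x. \<Sum>g\<in>F. f (act g x))"
    by (intro continuous_on_sum cont_act_comp[OF GS f])
  then show ?thesis unfolding SF_def[abs_def] by simp
qed

lemma R_implies_P:
  fixes act :: "'g::group_add \<Rightarrow> 'x::metric_space \<Rightarrow> 'x"
  assumes GS: "G_system act X" and FS: "Folner_seq Fs"
    and Dd: "mdim_upper act X Fs (\<lambda>_. 0) = ereal d"
    and fp: "finite_measure Mp" and fn: "finite_measure Mn"
    and sMp: "sets Mp = sets (restrict_space borel X)" and sMn: "sets Mn = sets (restrict_space borel X)"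
    and R: "\<forall>f. continuous_on X f \<longrightarrow> ereal (signed_integral Mp Mn f) \<le> mdim_upper act X Fs f"
  shows "invariant_prob act X Mp Mn"
proof -
  note gs = GS_facts[OF GS]
  have cX: "closed X" using gs(1) by (rule compact_imp_closed)
  have spMp: "space Mp = X" using sets_eq_imp_space_eq[OF sMp] by (simp add: space_restrict_space)
  have spMn: "space Mn = X" using sets_eq_imp_space_eq[OF sMn] by (simp add: space_restrict_space)
  have cardpos: "real (card (Fs n)) > 0" for n using FS_facts[OF FS, of n] by (simp add: card_gt_0_iff)
  define I where "I f = signed_integral Mp Mn f" for f
  have Ile: "I u \<le> d + a" if u: "continuous_on X u" and le: "\<And>n x. x \<in> X \<Longrightarrow> SF act (Fs n) u x \<le> c n"
      and lim: "(\<lambda>n. c n / real (card (Fs n))) \<longlonglongrightarrow> a" for u c a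
  proof -
    have "ereal (I u) \<le> mdim_upper act X Fs u" using R u by (simp add: I_def)
    also have "\<dots> \<le> ereal d + ereal a" using mdim_le_D[OF GS FS u le lim] Dd by simp
    finally show ?thesis by simp
  qed
  have intp: "integrable Mp f" "integrable Mn f" if "continuous_on X f" for f :: "'x \<Rightarrow> real"
    using int_cont[OF fp sMp gs(1) that] int_cont[OF fn sMn gs(1) that] by auto
  have Idiff: "I (\<lambda>x. f x - h x) = I f - I h" if "continuous_on X f" "continuous_on X h" for f h
    unfolding I_def signed_integral_def using intp[OF that(1)] intp[OF that(2)]
    by (simp add: integral_diff)
  have Iscale: "I (\<lambda>x. f x * t) = I f * t" for f t
    unfolding I_def signed_integral_def by (simp add: left_diff_distrib)
  define m where "m = measure Mp X - measure Mn X"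
  have Iconst: "I (\<lambda>_. c) = c * m" for c
    unfolding I_def signed_integral_def m_def using spMp spMn by (simp add: algebra_simps)
  have cm: "c * m \<le> d + c" for c
  proof -
    have "I (\<lambda>_. c) \<le> d + c"
    proof (rule Ile[where c="\<lambda>n. real (card (Fs n)) * c"])
      show "continuous_on X (\<lambda>_. c)" by simp
      show "SF act (Fs n) (\<lambda>_. c) x \<le> real (card (Fs n)) * c" for n x by (simp add: SF_const)
      have "(\<lambda>n. real (card (Fs n)) * c / real (card (Fs n))) = (\<lambda>n. c)"
        using cardpos by (auto simp: fun_eq_iff)
      then show "(\<lambda>n. real (card (Fs n)) * c / real (card (Fs n))) \<longlonglongrightarrow> c" by simp
    qed
    then show ?thesis by (simp add: Iconst)
  qed
  have m1: "m = 1"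
  proof (rule ccontr)
    assume "m \<noteq> 1"
    then consider "m > 1" | "m < 1" by linarith
    then show False
    proof cases
      case 1
      define c where "c = (\<bar>d\<bar> + 1) / (m - 1)"
      have "c * (m - 1) = \<bar>d\<bar> + 1" using 1 by (simp add: c_def)
      then show False using cm[of c] by (simp add: algebra_simps)
    next
      case 2
      define c where "c = - (\<bar>d\<bar> + 1) / (1 - m)"
      have "c * (m - 1) = \<bar>d\<bar> + 1" using 2 by (simp add: c_def field_simps)
      then show False using cm[of c] by (simp add: algebra_simps)
    qed
  qed
  have Ipos: "I f \<ge> 0" if f: "continuous_on X f" and f0: "\<And>x. x \<in> X \<Longrightarrow> 0 \<le> f x" for f
  proof (rule ccontr)
    assume neg: "\<not> I f \<ge> 0"
    define t where "t = - (\<bar>d\<bar> + 1) / I f"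
    have t: "t > 0"
    proof -
      have "I f < 0" using neg by simp
      moreover have "- (\<bar>d\<bar> + 1) < 0" by simp
      ultimately show ?thesis unfolding t_def by (rule divide_neg_neg[rotated])
    qed
    have "I (\<lambda>x. f x * (- t)) \<le> d + 0"
    proof (rule Ile[where c="\<lambda>n. 0"])
      show "continuous_on X (\<lambda>x. f x * (- t))" using f by (intro continuous_intros)
      fix n x assume "x \<in> X"
      have "SF act (Fs n) f x \<ge> 0" unfolding SF_def using f0 gs(4)[OF \<open>x \<in> X\<close>] by (auto intro: sum_nonneg)
      then show "SF act (Fs n) (\<lambda>x. f x * (- t)) x \<le> 0" unfolding SF_scale using t
        by (simp add: mult_nonneg_nonpos)
    qed simp
    moreover have "I (\<lambda>x. f x * (- t)) = \<bar>d\<bar> + 1" unfolding Iscale t_def using neg by simp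
    ultimately show False by simp
  qed
  have possets: "signed_val Mp Mn A \<ge> 0" if A: "A \<in> sets (restrict_space borel X)" for A
  proof -
    have "measure Mn A + measure Mn A \<le> measure Mp A + measure Mn A"
    proof (rule measure_ineq_from_integrals[OF fn fn fp fn sMn sMn sMp sMn cX _ A])
      fix f :: "'x \<Rightarrow> real" assume f: "continuous_on X f" "\<And>x. x \<in> X \<Longrightarrow> 0 \<le> f x \<and> f x \<le> 1"
      have "I f \<ge> 0" using Ipos[OF f(1)] f(2) by blast
      then show "integral\<^sup>L Mn f + integral\<^sup>L Mn f \<le> integral\<^sup>L Mp f + integral\<^sup>L Mn f"
        unfolding I_def signed_integral_def by simp
    qed
    then show ?thesis unfolding signed_val_def by simp
  qed
  have Iinv: "I (\<lambda>x. f (act g x)) = I f" if f: "continuous_on X f" for f g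
  proof -
    define h where "h x = f (act g x) - f x" for x
    have fg: "continuous_on X (\<lambda>x. f (act g x))" by (rule cont_act_comp[OF GS f])
    have hc: "continuous_on X h" unfolding h_def using fg f by (intro continuous_intros)
    obtain B where B: "B \<ge> 0" "\<And>x. x \<in> X \<Longrightarrow> \<bar>f x\<bar> \<le> B" using bound_on_X[OF gs(1) f] by blast
    have Ih: "I h * t \<le> d" for t
    proof -
      define c where "c n = \<bar>t\<bar> * (B * real (card (sym_diff ((\<lambda>h. g + h) ` Fs n) (Fs n))))" for n
      have "I (\<lambda>x. h x * t) \<le> d + 0"
      proof (rule Ile[where c=c])
        show "continuous_on X (\<lambda>x. h x * t)" using hc by (intro continuous_intros)
        fix n x assume x: "x \<in> X"
        have "\<bar>SF act (Fs n) h x\<bar> \<le> B * real (card (sym_diff ((\<lambda>h. g + h) ` Fs n) (Fs n)))"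
          unfolding h_def by (rule SF_translate_bound[OF GS _ B(2) x]) (use FS_facts[OF FS] in auto)
        then have "\<bar>SF act (Fs n) h x * t\<bar> \<le> c n"
          unfolding c_def abs_mult by (simp add: mult.commute mult_left_mono)
        then show "SF act (Fs n) (\<lambda>x. h x * t) x \<le> c n" unfolding SF_scale by simp
      next
        have "(\<lambda>n. real (card (sym_diff ((\<lambda>h. g + h) ` Fs n) (Fs n))) / real (card (Fs n))) \<longlonglongrightarrow> 0"
          using FS unfolding Folner_seq_def by blast
        then have "(\<lambda>n. (\<bar>t\<bar> * B) * (real (card (sym_diff ((\<lambda>h. g + h) ` Fs n) (Fs n))) / real (card (Fs n)))) \<longlonglongrightarrow> (\<bar>t\<bar> * B) * 0"
          by (rule tendsto_mult_left)
        then show "(\<lambda>n. c n / real (card (Fs n))) \<longlonglongrightarrow> 0" by (simp add: c_def mult.assoc)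
      qed
      then show ?thesis unfolding Iscale by simp
    qed
    have "I h = 0"
    proof (rule ccontr)
      assume nz: "I h \<noteq> 0"
      have "I h * ((\<bar>d\<bar> + 1) / I h) = \<bar>d\<bar> + 1" using nz by simp
      then show False using Ih[of "(\<bar>d\<bar> + 1) / I h"] by simp
    qed
    then show ?thesis using Idiff[OF fg f] unfolding h_def by simp
  qed
  have invsets: "signed_val Mp Mn (act g -` A \<inter> X) = signed_val Mp Mn A"
    if A: "A \<in> sets (restrict_space borel X)" for g A
  proof -
    have amp: "act g \<in> measurable Mp Mp" by (rule act_measurable[OF GS sMp])
    have amn: "act g \<in> measurable Mn Mn" by (rule act_measurable[OF GS sMn])
    define Mpg where "Mpg = distr Mp Mp (act g)"
    define Mng where "Mng = distr Mn Mn (act g)"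
    have fpg: "finite_measure Mpg" unfolding Mpg_def by (rule finite_measure.finite_measure_distr[OF fp amp])
    have fng: "finite_measure Mng" unfolding Mng_def by (rule finite_measure.finite_measure_distr[OF fn amn])
    have sMpg: "sets Mpg = sets (restrict_space borel X)" unfolding Mpg_def using sMp by simp
    have sMng: "sets Mng = sets (restrict_space borel X)" unfolding Mng_def using sMn by simp
    have key: "integral\<^sup>L Mp f + integral\<^sup>L Mng f = integral\<^sup>L Mn f + integral\<^sup>L Mpg f"
      if f: "continuous_on X f" for f :: "'x \<Rightarrow> real"
    proof -
      have "integral\<^sup>L Mpg f = integral\<^sup>L Mp (\<lambda>x. f (act g x))"
        unfolding Mpg_def by (rule integral_distr[OF amp cont_meas[OF sMp f]])
      moreover have "integral\<^sup>L Mng f = integral\<^sup>L Mn (\<lambda>x. f (act g x))"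
        unfolding Mng_def by (rule integral_distr[OF amn cont_meas[OF sMn f]])
      moreover have "I (\<lambda>x. f (act g x)) = I f" by (rule Iinv[OF f])
      ultimately show ?thesis unfolding I_def signed_integral_def by simp
    qed
    have A': "A \<in> sets Mp" "A \<in> sets Mn" using A sMp sMn by auto
    have "measure Mp A + measure Mng A \<le> measure Mn A + measure Mpg A"
      by (rule measure_ineq_from_integrals[OF fp fng fn fpg sMp sMng sMn sMpg cX _ A]) (use key in simp)
    moreover have "measure Mn A + measure Mpg A \<le> measure Mp A + measure Mng A"
      by (rule measure_ineq_from_integrals[OF fn fpg fp fng sMn sMpg sMp sMng cX _ A]) (use key in simp)
    moreover have "measure Mpg A = measure Mp (act g -` A \<inter> X)"
      unfolding Mpg_def using measure_distr[OF amp A'(1)] spMp by simp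
    moreover have "measure Mng A = measure Mn (act g -` A \<inter> X)"
      unfolding Mng_def using measure_distr[OF amn A'(2)] spMn by simp
    ultimately show ?thesis unfolding signed_val_def by linarith
  qed
  have "signed_val Mp Mn X = 1" using m1 unfolding m_def signed_val_def by simp
  then show ?thesis unfolding invariant_prob_def using possets invsets by blast
qed



lemma P_implies_Q:
  fixes act :: "'g::group_add \<Rightarrow> 'x::metric_space \<Rightarrow> 'x"
  assumes GS: "G_system act X" and FS: "Folner_seq Fs"
    and fp: "finite_measure Mp" and fn: "finite_measure Mn"
    and sMp: "sets Mp = sets (restrict_space borel X)" and sMn: "sets Mn = sets (restrict_space borel X)"
    and P: "invariant_prob act X Mp Mn"
  shows "\<forall>f. continuous_on X f \<longrightarrow> ereal (signed_integral Mp Mn f) \<le> mdim_lower act X Fs f"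
proof (intro allI impI)
  fix f :: "'x \<Rightarrow> real" assume f: "continuous_on X f"
  note gs = GS_facts[OF GS]
  interpret fp: finite_measure Mp by fact
  interpret fn: finite_measure Mn by fact
  have spMp: "space Mp = X" using sets_eq_imp_space_eq[OF sMp] by (simp add: space_restrict_space)
  have spMn: "space Mn = X" using sets_eq_imp_space_eq[OF sMn] by (simp add: space_restrict_space)
  have sE: "sets Mp = sets Mn" using sMp sMn by simp
  have Pd: "\<And>A. A \<in> sets Mp \<Longrightarrow> signed_val Mp Mn A \<ge> 0"
    "signed_val Mp Mn X = 1"
    "\<And>g A. A \<in> sets Mp \<Longrightarrow> signed_val Mp Mn (act g -` A \<inter> X) = signed_val Mp Mn A"
    using P sMp unfolding invariant_prob_def by auto
  have pos: "emeasure Mn A \<le> emeasure Mp A" if "A \<in> sets Mp" for A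
    using Pd(1)[OF that] unfolding signed_val_def
    by (simp add: fp.emeasure_eq_measure fn.emeasure_eq_measure)
  define nu where "nu = diff_measure Mp Mn"
  have snu: "sets nu = sets Mp" and spnu: "space nu = X" by (simp_all add: nu_def spMp)
  have enu: "emeasure nu A = ennreal (signed_val Mp Mn A)" if A: "A \<in> sets Mp" for A
  proof -
    have "emeasure nu A = emeasure Mp A - emeasure Mn A"
      unfolding nu_def by (rule emeasure_diff_measure[OF fp fn sE pos A])
    also have "\<dots> = ennreal (signed_val Mp Mn A)"
      by (simp add: fp.emeasure_eq_measure fn.emeasure_eq_measure signed_val_def ennreal_minus)
    finally show ?thesis .
  qed
  have fnu: "finite_measure nu"
  proof (rule finite_measureI)
    have "X \<in> sets Mp" using sets.top[of Mp] spMp by simp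
    then have "emeasure nu X = ennreal (signed_val Mp Mn X)" by (rule enu)
    then show "emeasure nu (space nu) \<noteq> \<infinity>" using spnu by simp
  qed
  have mnuX: "measure nu X = 1"
  proof -
    have "X \<in> sets Mp" using sets.top[of Mp] spMp by simp
    then have "emeasure nu X = ennreal 1" using enu Pd(2) by simp
    then show ?thesis by (simp add: measure_def)
  qed
  have sumE: "emeasure Mp A = emeasure nu A + emeasure Mn A" if A: "A \<in> sets Mp" for A
  proof -
    have "emeasure nu A = emeasure Mp A - emeasure Mn A"
      unfolding nu_def by (rule emeasure_diff_measure[OF fp fn sE pos A])
    then show ?thesis using pos[OF A] by (simp add: diff_add_cancel_ennreal)
  qed
  have snu': "sets nu = sets (restrict_space borel X)" using snu sMp by simp
  have Inu: "signed_integral Mp Mn u = integral\<^sup>L nu u" if u: "continuous_on X u" for u :: "'x \<Rightarrow> real"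
  proof -
    obtain B where B: "B \<ge> 0" "\<And>x. x \<in> X \<Longrightarrow> \<bar>u x\<bar> \<le> B" using bound_on_X[OF gs(1) u] by blast
    have "integral\<^sup>L Mp u = integral\<^sup>L nu u + integral\<^sup>L Mn u"
      by (rule integral_sum_measures[OF fp fnu fn snu sMn[folded sMp] sumE cont_meas[OF sMp u], of B])
         (use B spMp in auto)
    then show ?thesis unfolding signed_integral_def by simp
  qed
  have inv: "integral\<^sup>L nu (\<lambda>x. u (act g x)) = integral\<^sup>L nu u" if u: "continuous_on X u" for u :: "'x \<Rightarrow> real" and g
  proof -
    have am: "act g \<in> measurable nu nu" by (rule act_measurable[OF GS snu'])
    have "distr nu nu (act g) = nu"
    proof (rule measure_eqI)
      show "sets (distr nu nu (act g)) = sets nu" by simp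
      fix A assume "A \<in> sets (distr nu nu (act g))"
      then have A: "A \<in> sets nu" by simp
      have pre: "act g -` A \<inter> X \<in> sets nu" using measurable_sets[OF am A] spnu by simp
      have "emeasure (distr nu nu (act g)) A = emeasure nu (act g -` A \<inter> X)"
        using emeasure_distr[OF am A] spnu by simp
      also have "\<dots> = ennreal (signed_val Mp Mn (act g -` A \<inter> X))" using enu pre snu by simp
      also have "\<dots> = ennreal (signed_val Mp Mn A)" using Pd(3) A snu by simp
      also have "\<dots> = emeasure nu A" using enu A snu by simp
      finally show "emeasure (distr nu nu (act g)) A = emeasure nu A" .
    qed
    moreover have "integral\<^sup>L (distr nu nu (act g)) u = integral\<^sup>L nu (\<lambda>x. u (act g x))"
      by (rule integral_distr[OF am cont_meas[OF snu' u]])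
    ultimately show ?thesis by simp
  qed
  show "ereal (signed_integral Mp Mn f) \<le> mdim_lower act X Fs f"
  proof (rule mdim_lower_ge)
    fix e :: real assume e: "0 < e" "e < 1"
    define L where "L = ln (1 / e)"
    define u where "u x = f x * L" for x
    have uc: "continuous_on X u" unfolding u_def using f by (intro continuous_intros)
    have FS': "\<And>n. finite (Fs n) \<and> Fs n \<noteq> {}" using FS_facts[OF FS] by blast
    have "ereal (signed_integral Mp Mn f * L) \<le> pressure act X u Fs e"
    proof (rule pressure_lower[OF GS FS' e(1) uc])
      fix n
      define F where "F = Fs n"
      have fF: "finite F" using FS' by (simp add: F_def)
      have sc: "continuous_on X (SF act F u)" by (rule cont_SF[OF GS uc])
      obtain x0 where x0: "x0 \<in> X" "\<And>y. y \<in> X \<Longrightarrow> SF act F u y \<le> SF act F u x0"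
        using continuous_attains_sup[OF gs(1) gs(2) sc] by blast
      have intg: "integrable nu (\<lambda>x. u (act g x))" for g
        by (rule int_cont[OF fnu snu' gs(1) cont_act_comp[OF GS uc]])
      have "integral\<^sup>L nu (SF act F u) = (\<Sum>g\<in>F. integral\<^sup>L nu (\<lambda>x. u (act g x)))"
        unfolding SF_def using Bochner_Integration.integral_sum[where I=F and M=nu and f="\<lambda>g x. u (act g x)"] intg by simp
      also have "\<dots> = (\<Sum>g\<in>F. integral\<^sup>L nu u)" using inv[OF uc] by simp
      also have "\<dots> = real (card F) * (signed_integral Mp Mn f * L)"
      proof -
        have "integral\<^sup>L nu u = integral\<^sup>L nu f * L" unfolding u_def by simp
        then show ?thesis using Inu[OF f] by simp
      qed
      finally have eq: "integral\<^sup>L nu (SF act F u) = real (card F) * (signed_integral Mp Mn f * L)" .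
      have "integral\<^sup>L nu (SF act F u) \<le> integral\<^sup>L nu (\<lambda>_. SF act F u x0)"
        by (rule integral_mono[OF int_cont[OF fnu snu' gs(1) sc] finite_measure.integrable_const[OF fnu]])
           (use x0 spnu in auto)
      also have "\<dots> = SF act F u x0" using mnuX spnu by simp
      finally show "\<exists>x\<in>X. real (card (Fs n)) * (signed_integral Mp Mn f * L) \<le> SF act (Fs n) u x"
        using x0(1) eq unfolding F_def by auto
    qed
    then show "ereal (signed_integral Mp Mn f * ln (1 / e)) \<le> pressure act X (\<lambda>x. f x * ln (1 / e)) Fs e"
      unfolding u_def[abs_def] L_def .
  qed
qed

lemma lower_le_upper: "mdim_lower act X Fs f \<le> mdim_upper act X Fs f"
  unfolding mdim_lower_def mdim_upper_def by (rule Liminf_le_Limsup) simp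

theorem theorem4p13:
  fixes act :: "'g::{group_add, countable} \<Rightarrow> 'x::metric_space \<Rightarrow> 'x"
    and X :: "'x set" and Fs :: "nat \<Rightarrow> 'g set" and Mp Mn :: "'x measure"
  assumes "infinite (UNIV :: 'g set)"
    and "Folner_seq Fs"
    and "G_system act X"
    and "mdim_upper act X Fs (\<lambda>_. 0) < \<infinity>"
    and "finite_borel_on X Mp" and "finite_borel_on X Mn"
  shows "(invariant_prob act X Mp Mn
            \<longleftrightarrow> (\<forall>f. continuous_on X f \<longrightarrow> ereal (signed_integral Mp Mn f) \<le> mdim_lower act X Fs f))
       \<and> (invariant_prob act X Mp Mn
            \<longleftrightarrow> (\<forall>f. continuous_on X f \<longrightarrow> ereal (signed_integral Mp Mn f) \<le> mdim_upper act X Fs f))"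
proof -
  note GS = assms(3) and FS = assms(2)
  have fp: "finite_measure Mp" and sMp: "sets Mp = sets (restrict_space borel X)"
    using assms(5) unfolding finite_borel_on_def by auto
  have fn: "finite_measure Mn" and sMn: "sets Mn = sets (restrict_space borel X)"
    using assms(6) unfolding finite_borel_on_def by auto
  have FS': "\<And>n. finite (Fs n) \<and> Fs n \<noteq> {}" using FS_facts[OF FS] by blast
  have "ereal 0 \<le> mdim_lower act X Fs (\<lambda>_. 0)"
  proof (rule mdim_lower_ge)
    fix e :: real assume e: "0 < e" "e < 1"
    have "ereal 0 \<le> pressure act X (\<lambda>x. 0 * ln (1 / e)) Fs e"
    proof (rule pressure_lower[OF GS FS' e(1)])
      show "continuous_on X (\<lambda>x. 0 * ln (1 / e))" by simp
      fix n
      obtain x where "x \<in> X" using GS_facts(2)[OF GS] by blast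
      then show "\<exists>x\<in>X. real (card (Fs n)) * 0 \<le> SF act (Fs n) (\<lambda>x. 0 * ln (1 / e)) x"
        by (auto simp: SF_def)
    qed
    then show "ereal (0 * ln (1 / e)) \<le> pressure act X (\<lambda>x. 0 * ln (1 / e)) Fs e" by simp
  qed
  then have D0: "ereal 0 \<le> mdim_upper act X Fs (\<lambda>_. 0)" by (rule order_trans[OF _ lower_le_upper])
  then obtain d where Dd: "mdim_upper act X Fs (\<lambda>_. 0) = ereal d"
    using assms(4) by (cases "mdim_upper act X Fs (\<lambda>_. 0)") auto
  have PQ: "invariant_prob act X Mp Mn \<Longrightarrow> (\<forall>f. continuous_on X f \<longrightarrow> ereal (signed_integral Mp Mn f) \<le> mdim_lower act X Fs f)"
    by (rule P_implies_Q[OF GS FS fp fn sMp sMn])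
  have QR: "(\<forall>f. continuous_on X f \<longrightarrow> ereal (signed_integral Mp Mn f) \<le> mdim_lower act X Fs f) \<Longrightarrow>
      (\<forall>f. continuous_on X f \<longrightarrow> ereal (signed_integral Mp Mn f) \<le> mdim_upper act X Fs f)"
    using lower_le_upper order_trans by blast
  have RP: "(\<forall>f. continuous_on X f \<longrightarrow> ereal (signed_integral Mp Mn f) \<le> mdim_upper act X Fs f) \<Longrightarrow> invariant_prob act X Mp Mn"
    by (rule R_implies_P[OF GS FS Dd fp fn sMp sMn])
  show ?thesis using PQ QR RP by blast
qed

end
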